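(* Let $\varrho$ be a normalized proximate order of order $\rho>0$ and let $f(x)=\sum_{\ell=0}^\infty x^\ell a_\ell\in A_\varrho$. Suppose $\sigma\ge0$ satisfies $$\frac{1}{\rho}\ln(\sigma)\ge\limsup_{\ell\to\infty}\Big(\frac1\ell\ln|a_\ell|+\ln(\varphi(\ell))\Big)-\frac1\rho-\frac{\ln(\rho)}{\rho},$$ where $\ln(0)=-\infty$. Then for every $\tau'>\sigma$ there exist positive constants $N$ and $C$ such that $$\sup_{\ell\ge N}\big(\ln|a_\ell|+\ell\ln(r)\big)\le\tau' r^{\varrho(r)}+C\qquad\text{for all }r>0.$$
   Context: $\mathbb{R}_n$ is the real Clifford algebra generated by $e_1,\dots,e_n$ with $e_ie_j=-e_je_i$ ($i\ne j$), $e_i^2=-1$, with Euclidean norm $|a|^2=\sum_Aa_A^2$. Paravectors $x=x_0+\sum x_\ell e_\ell$ are identified with $\mathbb{R}^{n+1}$; $\mathbb{S}=\{\sum x_\ell e_\ell:\sum x_\ell^2=1\}$. $\mathcal{SM}_L(\mathbb{R}^{n+1})$ is the set of entire left slice monogenic functions: $f(u+jv)=f_0(u,v)+jf_1(u,v)$ for all $u,v\in\mathbb{R}$, $j\in\mathbb{S}$, with $f_0,f_1$ continuously differentiable, $f_0$ even and $f_1$ odd in $v$, $\partial_uf_0=\partial_vf_1$, $\partial_vf_0=-\partial_uf_1$; each such $f$ equals its series $\sum x^\ell a_\ell$, $a_\ell\in\mathbb{R}_n$. A proximate order is a differentiable $\varrho:[0,\infty)\to[0,\infty)$ with $\lim_{r\to\infty}\varrho(r)=\rho>0$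 and $\lim_{r\to\infty}\varrho'(r)r\ln r=0$; normalized means $r\mapsto r^{\varrho(r)}$ is strictly increasing on $(0,\infty)$ and tends to $0$ as $r\to0^+$; $\varphi$ is the inverse of $r\mapsto r^{\varrho(r)}$. $A_\varrho=\bigcup_{\sigma>0}\{f\in\mathcal{SM}_L(\mathbb{R}^{n+1}):\sup_x|f(x)|e^{-\sigma|x|^{\varrho(|x|)}}<\infty\}$. Here $\ln|a_\ell|=-\infty$ if $a_\ell=0$. *)

theory Defs
  imports "HOL-Analysis.Analysis"
begin

text \<open>An element a of R_n is represented by its coefficient function
  A |-> a_A on finite subsets A of {1..n} (a = sum_A a_A e_A, with
  e_A = e_{i1}...e_{ik}, i1 < ... < ik).\<close>

type_synonym clif = "nat set \<Rightarrow> real"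

definition clif_space :: "nat \<Rightarrow> clif set" where
  "clif_space n = {a. \<forall>A. \<not> A \<subseteq> {1..n} \<longrightarrow> a A = 0}"

text \<open>Sign in e_A e_B = sgn(A,B) e_(A symmetric-difference B), using
  e_i e_j = - e_j e_i (i \<noteq> j) and e_i^2 = -1.\<close>
definition clif_sign :: "nat set \<Rightarrow> nat set \<Rightarrow> real" where
  "clif_sign A B = (-1) ^ (card {(a, b). a \<in> A \<and> b \<in> B \<and> b < a} + card (A \<inter> B))"

definition clif_mult :: "nat \<Rightarrow> clif \<Rightarrow> clif \<Rightarrow> clif" where
  "clif_mult n a b = (\<lambda>C. \<Sum>A\<in>Pow {1..n}.
      clif_sign A ((A - C) \<union> (C - A)) * a A * b ((A - C) \<union> (C - A)))"

definition clif_add :: "clif \<Rightarrow> clif \<Rightarrow> clif" where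
  "clif_add a b = (\<lambda>A. a A + b A)"

definition clif_one :: clif where
  "clif_one = (\<lambda>A. if A = {} then 1 else 0)"

primrec clif_pow :: "nat \<Rightarrow> clif \<Rightarrow> nat \<Rightarrow> clif" where
  "clif_pow n x 0 = clif_one"
| "clif_pow n x (Suc k) = clif_mult n (clif_pow n x k) x"

definition clif_norm :: "nat \<Rightarrow> clif \<Rightarrow> real" where
  "clif_norm n a = sqrt (\<Sum>A\<in>Pow {1..n}. (a A)\<^sup>2)"

definition paravector :: "nat \<Rightarrow> clif \<Rightarrow> bool" where
  "paravector n x \<longleftrightarrow> (\<forall>A. x A \<noteq> 0 \<longrightarrow> A = {} \<or> (\<exists>l\<in>{1..n}. A = {l}))"

definition imag_unit :: "nat \<Rightarrow> clif \<Rightarrow> bool" where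
  "imag_unit n j \<longleftrightarrow> paravector n j \<and> j {} = 0 \<and> (\<Sum>l=1..n. (j {l})\<^sup>2) = 1"

definition slice_pt :: "real \<Rightarrow> clif \<Rightarrow> real \<Rightarrow> clif" where
  "slice_pt u j v = (\<lambda>A. if A = {} then u else v * j A)"

text \<open>f_0, f_1 continuously differentiable on R^2: all (componentwise) partial
  derivatives exist everywhere and are continuous on R^2.\<close>
definition slice_monogenic :: "nat \<Rightarrow> (clif \<Rightarrow> clif) \<Rightarrow> bool" where
  "slice_monogenic n f \<longleftrightarrow>
     (\<forall>x. paravector n x \<longrightarrow> f x \<in> clif_space n) \<and>
     (\<exists>f0 f1 Du0 Dv0 Du1 Dv1 :: real \<Rightarrow> real \<Rightarrow> clif.
        (\<forall>u v. f0 u v \<in> clif_space n \<and> f1 u v \<in> clif_space n) \<and>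
        (\<forall>u v j. imag_unit n j \<longrightarrow>
            f (slice_pt u j v) = clif_add (f0 u v) (clif_mult n j (f1 u v))) \<and>
        (\<forall>u v A. f0 u (- v) A = f0 u v A \<and> f1 u (- v) A = - f1 u v A) \<and>
        (\<forall>u v A.
            ((\<lambda>t. f0 t v A) has_real_derivative Du0 u v A) (at u) \<and>
            ((\<lambda>t. f0 u t A) has_real_derivative Dv0 u v A) (at v) \<and>
            ((\<lambda>t. f1 t v A) has_real_derivative Du1 u v A) (at u) \<and>
            ((\<lambda>t. f1 u t A) has_real_derivative Dv1 u v A) (at v)) \<and>
        (\<forall>A. continuous_on UNIV (\<lambda>p::real\<times>real. Du0 (fst p) (snd p) A) \<and>
             continuous_on UNIV (\<lambda>p::real\<times>real. Dv0 (fst p) (snd p) A) \<and>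
             continuous_on UNIV (\<lambda>p::real\<times>real. Du1 (fst p) (snd p) A) \<and>
             continuous_on UNIV (\<lambda>p::real\<times>real. Dv1 (fst p) (snd p) A)) \<and>
        (\<forall>u v A. Du0 u v A = Dv1 u v A \<and> Dv0 u v A = - Du1 u v A))"

definition proximate_order :: "(real \<Rightarrow> real) \<Rightarrow> real \<Rightarrow> bool" where
  "proximate_order \<rho>\<^sub>p \<rho> \<longleftrightarrow>
     \<rho> > 0 \<and> (\<forall>r\<ge>0. \<rho>\<^sub>p r \<ge> 0) \<and> \<rho>\<^sub>p differentiable_on {0..} \<and>
     (\<rho>\<^sub>p \<longlongrightarrow> \<rho>) at_top \<and>
     ((\<lambda>r. deriv \<rho>\<^sub>p r * r * ln r) \<longlongrightarrow> 0) at_top"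

definition normalized_proximate_order :: "(real \<Rightarrow> real) \<Rightarrow> real \<Rightarrow> bool" where
  "normalized_proximate_order \<rho>\<^sub>p \<rho> \<longleftrightarrow>
     proximate_order \<rho>\<^sub>p \<rho> \<and>
     strict_mono_on {0<..} (\<lambda>r. r powr \<rho>\<^sub>p r) \<and>
     ((\<lambda>r. r powr \<rho>\<^sub>p r) \<longlongrightarrow> 0) (at_right 0)"

text \<open>phi: the inverse of r |-> r^(rho(r)) on (0,oo).\<close>
definition prox_inv :: "(real \<Rightarrow> real) \<Rightarrow> real \<Rightarrow> real" where
  "prox_inv \<rho>\<^sub>p = inv_into {0<..} (\<lambda>r. r powr \<rho>\<^sub>p r)"

definition A_class :: "nat \<Rightarrow> (real \<Rightarrow> real) \<Rightarrow> (clif \<Rightarrow> clif) set" where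
  "A_class n \<rho>\<^sub>p = {f. slice_monogenic n f \<and>
     (\<exists>\<sigma>>0. \<exists>M. \<forall>x. paravector n x \<longrightarrow>
        clif_norm n (f x) * exp (- \<sigma> * clif_norm n x powr \<rho>\<^sub>p (clif_norm n x)) \<le> M)}"

definition lnE :: "real \<Rightarrow> ereal" where
  "lnE t = (if t = 0 then -\<infinity> else ereal (ln t))"

end

theory Submission
  imports Defs
begin

lemma rho_deriv:
  assumes "rp differentiable_on {0..}" "(u::real) > 0"
  shows "DERIV rp u :> deriv rp u"
proof -
  have "rp differentiable at u within {0..}" by (meson assms atLeast_iff less_imp_le differentiable_on_def)
  moreover have "at u within {0..} = at u" by (rule at_within_interior) (simp add: assms)
  ultimately have "rp differentiable at u" by simp
  thus ?thesis using DERIV_deriv_iff_real_differentiable by blast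
qed

lemma L_deriv:
  assumes "rp differentiable_on {0..}"
  shows "DERIV (\<lambda>x. rp (exp x) * x) (x::real) :> (deriv rp (exp x) * exp x * x + rp (exp x))"
proof -
  have d1: "DERIV (\<lambda>x. rp (exp x)) x :> deriv rp (exp x) * exp x"
    using DERIV_chain2[OF rho_deriv[OF assms exp_gt_zero] DERIV_exp] .
  from DERIV_mult[OF d1 DERIV_ident] show ?thesis by simp
qed

lemma V_surj:
  assumes rho: "normalized_proximate_order rp \<rho>" and y: "(y::real) \<ge> 1"
  shows "\<exists>s>0. s powr rp s = y"
proof -
  from rho have rpos: "\<rho> > 0" and diff: "rp differentiable_on {0..}" and lim: "(rp \<longlongrightarrow> \<rho>) at_top"
    unfolding normalized_proximate_order_def proximate_order_def by auto
  have "eventually (\<lambda>r. rp r > \<rho>/2) at_top"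
    using order_tendstoD(1)[OF lim, of "\<rho>/2"] rpos by simp
  then obtain R where R: "\<And>r. r \<ge> R \<Longrightarrow> rp r > \<rho>/2" by (auto simp: eventually_at_top_linorder)
  define r2 where "r2 = max 1 (max R (exp (2 * ln y / \<rho>)))"
  have r2: "r2 \<ge> 1" "r2 \<ge> R" "r2 \<ge> exp (2 * ln y / \<rho>)" by (auto simp: r2_def)
  have "ln r2 \<ge> 2 * ln y / \<rho>" using r2(3) r2(1)
    by (metis exp_gt_zero ln_exp ln_le_cancel_iff order_less_le_trans zero_less_one)
  hence "\<rho>/2 * ln r2 \<ge> ln y" using rpos by (simp add: field_simps)
  moreover have "rp r2 * ln r2 \<ge> \<rho>/2 * ln r2" using R[OF r2(2)] r2(1)
    by (intro mult_right_mono) auto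
  ultimately have "ln y \<le> rp r2 * ln r2" by linarith
  hence "y \<le> r2 powr rp r2" using y r2(1)
    by (metis exp_le_cancel_iff exp_ln less_le_trans powr_def zero_less_one not_one_le_zero)
  moreover have "1 powr rp 1 \<le> y" using y by simp
  moreover have "continuous_on {1..r2} (\<lambda>r. r powr rp r)"
  proof -
    have c: "continuous_on {1..r2} rp"
      using differentiable_imp_continuous_on[OF diff] by (rule continuous_on_subset) auto
    have "continuous_on {1..r2} (\<lambda>r. exp (rp r * ln r))"
      by (intro continuous_intros c) auto
    thus ?thesis by (rule continuous_on_cong[THEN iffD1, rotated 2]) (auto simp: powr_def)
  qed
  ultimately obtain s where "1 \<le> s" "s powr rp s = y" using IVT'[of "\<lambda>r. r powr rp r" 1 y r2] r2(1) by auto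
  thus ?thesis by (intro exI[of _ s]) auto
qed


lemma core:
  assumes rho: "normalized_proximate_order rp \<rho>" and tp: "tau' > 0"
    and Kc: "\<rho> * K - 1 - ln \<rho> < ln tau'"
  shows "\<exists>S>0. \<forall>s\<ge>S. \<forall>r>0. s powr rp s * (K + ln r - ln s) \<le> tau' * r powr rp r + 1"
proof -
  from rho have rpos: "\<rho> > 0" and diff: "rp differentiable_on {0..}" and lim: "(rp \<longlongrightarrow> \<rho>) at_top"
    and dlim: "((\<lambda>r. deriv rp r * r * ln r) \<longlongrightarrow> 0) at_top"
    unfolding normalized_proximate_order_def proximate_order_def by auto
  define g where "g = (\<lambda>e::real. e * K - 1 - ln e)"
  have "isCont g \<rho>" unfolding g_def using rpos by (intro continuous_intros) auto
  hence "(g \<longlongrightarrow> g \<rho>) (at \<rho>)" by (simp add: isCont_def)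
  hence "eventually (\<lambda>e. g e < ln tau') (at \<rho>)"
    using order_tendstoD(2) Kc g_def by auto
  then obtain d where d: "d > 0" "\<And>e. e \<noteq> \<rho> \<Longrightarrow> dist e \<rho> < d \<Longrightarrow> g e < ln tau'"
    by (auto simp: eventually_at)
  define \<epsilon> where "\<epsilon> = min (d/2) (\<rho>/2)"
  have ep: "\<epsilon> > 0" "\<epsilon> < \<rho>" "\<epsilon> < d" using d rpos by (auto simp: \<epsilon>_def)
  have g1: "g (\<rho> - \<epsilon>) < ln tau'" using d(2)[of "\<rho> - \<epsilon>"] ep by (auto simp: dist_real_def)
  have g2: "g (\<rho> + \<epsilon>) < ln tau'" using d(2)[of "\<rho> + \<epsilon>"] ep by (auto simp: dist_real_def)
  define L where "L = (\<lambda>x. rp (exp x) * x)"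
  define L' where "L' = (\<lambda>x. deriv rp (exp x) * exp x * x + rp (exp x))"
  have LD: "DERIV L x :> L' x" for x unfolding L_def L'_def by (rule L_deriv[OF diff])
  have "((\<lambda>x. deriv rp (exp x) * exp x * ln (exp x)) \<longlongrightarrow> 0) at_top"
    using filterlim_compose[OF dlim exp_at_top] by (simp add: o_def)
  moreover have "((\<lambda>x. rp (exp x)) \<longlongrightarrow> \<rho>) at_top"
    using filterlim_compose[OF lim exp_at_top] by (simp add: o_def)
  ultimately have "(L' \<longlongrightarrow> 0 + \<rho>) at_top" unfolding L'_def
    by (intro tendsto_add) auto
  hence "eventually (\<lambda>x. \<rho> - \<epsilon> < L' x) at_top" "eventually (\<lambda>x. L' x < \<rho> + \<epsilon>) at_top"
    using ep by (auto intro: order_tendstoD)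
  hence "eventually (\<lambda>x. \<rho> - \<epsilon> < L' x \<and> L' x < \<rho> + \<epsilon>) at_top" by (rule eventually_conj)
  then obtain X where X: "\<And>x. x \<ge> X \<Longrightarrow> \<rho> - \<epsilon> < L' x \<and> L' x < \<rho> + \<epsilon>"
    by (auto simp: eventually_at_top_linorder)
  define S where "S = exp (X + \<bar>K\<bar>)"
  have VL: "t powr rp t = exp (L (ln t))" if "t > 0" for t
    using that by (simp add: L_def powr_def)
  show ?thesis
  proof (intro exI[of _ S] conjI allI impI)
    show "S > 0" by (simp add: S_def)
    fix s r :: real assume sS: "s \<ge> S" and r: "r > 0"
    have spos: "s > 0" using sS \<open>S > 0\<close> by linarith
    define x where "x = ln s"
    define y where "y = ln r - x"
    have xX: "x \<ge> X + \<bar>K\<bar>" unfolding x_def S_def using sS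
      by (metis S_def exp_gt_zero ln_exp ln_le_cancel_iff spos)
    have Vs: "s powr rp s = exp (L x)" using VL[OF spos] x_def by simp
    have Vr: "r powr rp r = exp (L (x + y))" using VL[OF r] y_def by simp
    have eq: "K + ln r - ln s = K + y" by (simp add: x_def y_def)
    show "s powr rp s * (K + ln r - ln s) \<le> tau' * r powr rp r + 1"
    proof (cases "K + y \<le> 0")
      case True
      have "exp (L x) * (K + y) \<le> 0" using True by (simp add: mult_nonneg_nonpos)
      moreover have "tau' * exp (L (x + y)) \<ge> 0" using tp by simp
      ultimately show ?thesis unfolding eq Vs Vr by linarith
    next
      case False
      hence Ky: "K + y > 0" by simp
      have key: "L x + ln (K + y) \<le> ln tau' + L (x + y)"
      proof (cases "y \<ge> 0")
        case True
        define k where "k = \<rho> - \<epsilon>"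
        have kp: "k > 0" using ep by (simp add: k_def)
        have "(\<lambda>z. L z - k * z) x \<le> (\<lambda>z. L z - k * z) (x + y)"
        proof (rule DERIV_nonneg_imp_nondecreasing[where f="\<lambda>z. L z - k * z"])
          show "x \<le> x + y" using True by simp
          fix z assume "x \<le> z" "z \<le> x + y"
          hence "z \<ge> X" using xX by linarith
          hence "L' z - k \<ge> 0" using X[of z] k_def by simp
          moreover have "DERIV (\<lambda>z. L z - k * z) z :> L' z - k"
            using DERIV_diff[OF LD DERIV_cmult[OF DERIV_ident, of k]] by simp
          ultimately show "\<exists>yy. DERIV (\<lambda>z. L z - k * z) z :> yy \<and> yy \<ge> 0" by blast
        qed
        hence A: "L (x + y) - L x \<ge> k * y" by (simp add: algebra_simps)
        have "ln (k * (K + y)) \<le> k * (K + y) - 1" using kp Ky by (intro ln_le_minus_one) simp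
        hence B: "ln (K + y) \<le> k * (K + y) - 1 - ln k" using kp Ky by (simp add: ln_mult)
        have "g k < ln tau'" using g1 k_def by simp
        thus ?thesis using A B unfolding g_def by (simp add: algebra_simps)
      next
        case False
        define k where "k = \<rho> + \<epsilon>"
        have kp: "k > 0" using ep rpos by (simp add: k_def)
        have "(\<lambda>z. k * z - L z) (x + y) \<le> (\<lambda>z. k * z - L z) x"
        proof (rule DERIV_nonneg_imp_nondecreasing[where f="\<lambda>z. k * z - L z"])
          show "x + y \<le> x" using False by simp
          fix z assume "x + y \<le> z" "z \<le> x"
          hence "z \<ge> X" using xX Ky by linarith
          hence "k - L' z \<ge> 0" using X[of z] k_def by simp
          moreover have "DERIV (\<lambda>z. k * z - L z) z :> k - L' z"
            using DERIV_diff[OF DERIV_cmult[OF DERIV_ident, of k] LD] by simp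
          ultimately show "\<exists>yy. DERIV (\<lambda>z. k * z - L z) z :> yy \<and> yy \<ge> 0" by blast
        qed
        hence A: "L (x + y) - L x \<ge> k * y" by (simp add: algebra_simps)
        have "ln (k * (K + y)) \<le> k * (K + y) - 1" using kp Ky by (intro ln_le_minus_one) simp
        hence B: "ln (K + y) \<le> k * (K + y) - 1 - ln k" using kp Ky by (simp add: ln_mult)
        have "g k < ln tau'" using g2 k_def by simp
        thus ?thesis using A B unfolding g_def by (simp add: algebra_simps)
      qed
      have "exp (L x) * (K + y) = exp (L x + ln (K + y))" using Ky by (simp add: exp_add)
      also have "\<dots> \<le> exp (ln tau' + L (x + y))" using key by simp
      also have "\<dots> = tau' * exp (L (x + y))" using tp by (simp add: exp_add)
      finally have "exp (L x) * (K + y) \<le> tau' * exp (L (x + y))" .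
      thus ?thesis unfolding eq Vs Vr by linarith
    qed
  qed
qed


theorem lemma3p6:
  fixes n :: nat and \<rho>\<^sub>p :: "real \<Rightarrow> real" and \<rho> \<sigma> :: real
    and f :: "clif \<Rightarrow> clif" and a :: "nat \<Rightarrow> clif"
  assumes rho: "normalized_proximate_order \<rho>\<^sub>p \<rho>"
    and fA: "f \<in> A_class n \<rho>\<^sub>p"
    and a_space: "\<forall>l. a l \<in> clif_space n"
    and series: "\<forall>x. paravector n x \<longrightarrow>
                   (\<forall>A. (\<lambda>l. clif_mult n (clif_pow n x l) (a l) A) sums (f x A))"
    and sigma: "\<sigma> \<ge> 0"
    and hyp: "ereal (1 / \<rho>) * lnE \<sigma> \<ge>
       limsup (\<lambda>l. ereal (1 / real l) * lnE (clif_norm n (a l))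
                    + ereal (ln (prox_inv \<rho>\<^sub>p (real l))))
       - ereal (1 / \<rho>) - ereal (ln \<rho> / \<rho>)"
  shows "\<forall>\<tau>'>\<sigma>. \<exists>N::nat. \<exists>C::real. N > 0 \<and> C > 0 \<and>
           (\<forall>r>0. (SUP l\<in>{N..}. lnE (clif_norm n (a l)) + ereal (real l * ln r))
                    \<le> ereal (\<tau>' * r powr \<rho>\<^sub>p r + C))"
proof (intro allI impI)
  fix tau' assume tau': "tau' > \<sigma>"
  from rho have rpos: "\<rho> > 0" and mono: "strict_mono_on {0<..} (\<lambda>r. r powr \<rho>\<^sub>p r)"
    unfolding normalized_proximate_order_def proximate_order_def by auto
  define \<tau> where "\<tau> = (\<sigma> + tau') / 2"
  have tau: "\<tau> > 0" "\<sigma> < \<tau>" "\<tau> < tau'" using sigma tau' by (auto simp: \<tau>_def)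
  define K where "K = (ln \<tau> + 1 + ln \<rho>) / \<rho>"
  have "\<rho> * K = ln \<tau> + 1 + ln \<rho>" using rpos by (simp add: K_def)
  moreover have "ln \<tau> < ln tau'" using tau by simp
  ultimately have Kc: "\<rho> * K - 1 - ln \<rho> < ln tau'" by linarith
  obtain S where S: "S > 0" "\<And>s r. s \<ge> S \<Longrightarrow> r > 0 \<Longrightarrow>
      s powr \<rho>\<^sub>p s * (K + ln r - ln s) \<le> tau' * r powr \<rho>\<^sub>p r + 1"
    using core[OF rho _ Kc] tau by fastforce
  define b where "b = (\<lambda>l. ereal (1 / real l) * lnE (clif_norm n (a l))
                    + ereal (ln (prox_inv \<rho>\<^sub>p (real l))))"
  have "limsup b < ereal K"
  proof (cases "\<sigma> = 0")
    case True
    hence "ereal (1/\<rho>) * lnE \<sigma> = -\<infinity>" using rpos by (simp add: lnE_def)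
    with hyp have "limsup b - ereal (1/\<rho>) - ereal (ln \<rho>/\<rho>) \<le> -\<infinity>" by (simp add: b_def)
    hence "limsup b = -\<infinity>" by (cases "limsup b") auto
    thus ?thesis by simp
  next
    case False
    hence sp: "\<sigma> > 0" using sigma by auto
    hence "ereal (1/\<rho>) * lnE \<sigma> = ereal (ln \<sigma>/\<rho>)" by (simp add: lnE_def)
    with hyp have h: "limsup b - ereal (1/\<rho>) - ereal (ln \<rho>/\<rho>) \<le> ereal (ln \<sigma>/\<rho>)" by (simp add: b_def)
    have "ln \<sigma> < ln \<tau>" using sp tau by simp
    hence "ln \<sigma>/\<rho> < ln \<tau>/\<rho>" using rpos by (simp add: divide_strict_right_mono)
    hence "ln \<sigma>/\<rho> + 1/\<rho> + ln \<rho>/\<rho> < K" by (simp add: K_def add_divide_distrib)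
    with h show ?thesis by (cases "limsup b") auto
  qed
  hence "eventually (\<lambda>l. b l < ereal K) sequentially" by (rule Limsup_lessD)
  then obtain N0 where N0: "\<And>l. l \<ge> N0 \<Longrightarrow> b l < ereal K" by (auto simp: eventually_sequentially)
  define V0 where "V0 = S powr \<rho>\<^sub>p S"
  define N where "N = max (max N0 1) (nat \<lceil>V0\<rceil> + 1)"
  show "\<exists>N::nat. \<exists>C::real. N > 0 \<and> C > 0 \<and>
           (\<forall>r>0. (SUP l\<in>{N..}. lnE (clif_norm n (a l)) + ereal (real l * ln r))
                    \<le> ereal (tau' * r powr \<rho>\<^sub>p r + C))"
  proof (intro exI[of _ N] exI[of _ "1::real"] conjI allI impI)
    show "N > 0" by (simp add: N_def)
    show "(0::real) < 1" by simp
    fix r :: real assume r: "r > 0"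
    show "(SUP l\<in>{N..}. lnE (clif_norm n (a l)) + ereal (real l * ln r))
                    \<le> ereal (tau' * r powr \<rho>\<^sub>p r + 1)"
    proof (rule SUP_least)
      fix l assume "l \<in> {N..}"
      hence lN: "l \<ge> N" by simp
      hence l1: "real l \<ge> 1" "l \<ge> N0" and lV0: "real l > V0"
        unfolding N_def by (auto, linarith)
      obtain s0 where "s0 > 0" "s0 powr \<rho>\<^sub>p s0 = real l" using V_surj[OF rho l1(1)] by blast
      hence img: "real l \<in> (\<lambda>r. r powr \<rho>\<^sub>p r) ` {0<..}" by force
      define s where "s = prox_inv \<rho>\<^sub>p (real l)"
      have spos: "s > 0" using inv_into_into[OF img] by (simp add: s_def prox_inv_def)
      have Vs: "s powr \<rho>\<^sub>p s = real l" using f_inv_into_f[OF img] by (simp add: s_def prox_inv_def)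
      have sS: "s \<ge> S"
      proof (rule ccontr)
        assume "\<not> s \<ge> S"
        hence "s powr \<rho>\<^sub>p s < V0" unfolding V0_def
          using strict_mono_onD[OF mono, of s S] spos S(1) by auto
        thus False using Vs lV0 by simp
      qed
      have bl: "ereal (1 / real l) * lnE (clif_norm n (a l)) + ereal (ln s) < ereal K"
        using N0[OF l1(2)] by (simp add: b_def s_def)
      show "lnE (clif_norm n (a l)) + ereal (real l * ln r) \<le> ereal (tau' * r powr \<rho>\<^sub>p r + 1)"
      proof (cases "clif_norm n (a l) = 0")
        case True
        thus ?thesis by (simp add: lnE_def)
      next
        case False
        have "clif_norm n (a l) \<ge> 0" by (simp add: clif_norm_def sum_nonneg)
        with False have np: "clif_norm n (a l) > 0" by simp
        let ?m = "ln (clif_norm n (a l))"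
        have "?m / real l + ln s < K" using bl False l1 by (simp add: lnE_def)
        hence "?m < real l * (K - ln s)" using l1 by (simp add: field_simps)
        hence "?m + real l * ln r \<le> real l * (K + ln r - ln s)" by (simp add: algebra_simps)
        also have "\<dots> \<le> tau' * r powr \<rho>\<^sub>p r + 1" using S(2)[OF sS r] Vs by simp
        finally show ?thesis using False by (simp add: lnE_def)
      qed
    qed
  qed
qed

end
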